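(* Let $N\ge 1$, $m_1,m_2>0$, $\varepsilon\in(0,1]$, $\alpha\in[0,1]$, and let $\delta,\gamma\in\mathbb{R}$ satisfy $$\frac{\frac{m_1}{m_2}\varepsilon-1}{1+\frac{m_1}{m_2}\varepsilon}\le\delta\le 1,\qquad 0\le\gamma\le\frac{m_1}{N}(1-\delta)\Big[\big(1+\tfrac{m_1}{m_2}\varepsilon\big)\delta+1-\tfrac{m_1}{m_2}\varepsilon\Big].$$ For every $q>N+2$ there is a constant $C_q>0$, independent of $f_1,f_2$, such that for every pair of functions $f_1,f_2:\mathbb{R}^N\to[0,\infty)$ with $(1+|v|^2)f_k\in L^1(\mathbb{R}^N)$ and $n_k>0$ ($k=1,2$), with the macroscopic quantities defined as in the context: (ii.1) $n_k(T_k+|u_k|^2)^{\frac{q-N}{2}}\le C_q N_q(f_k)$ for $k=1,2$; (ii.2) $n_1(T_{12}+|u_{12}|^2)^{\frac{q-N}{2}}\le C_q\big(N_q(f_1)+\frac{n_1}{n_2}N_q(f_2)\big)$; (ii.3) $n_2(T_{21}+|u_{21}|^2)^{\frac{q-N}{2}}\le C_q\big(\frac{n_2}{n_1}N_q(f_1)+N_q(f_2)\big)$.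
   Context: For $k=1,2$ define $n_k=\int f_k(v)\,dv$, $n_ku_k=\int v f_k(v)\,dv$, and $N n_k T_k=\int m_k|v-u_k|^2 f_k(v)\,dv$. Define the mixture quantities $u_{12}=\delta u_1+(1-\delta)u_2$, $u_{21}=u_2-\frac{m_1}{m_2}\varepsilon(1-\delta)(u_2-u_1)$, $T_{12}=\alpha T_1+(1-\alpha)T_2+\gamma|u_1-u_2|^2$, $T_{21}=\Big[\frac1N\varepsilon m_1(1-\delta)\big(\frac{m_1}{m_2}\varepsilon(\delta-1)+\delta+1\big)-\varepsilon\gamma\Big]|u_1-u_2|^2+\varepsilon(1-\alpha)T_1+(1-\varepsilon(1-\alpha))T_2$. For $q\ge 0$, $N_q(f_k)=\sup_v |v|^q f_k(v)$. *)

theory Defs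
  imports "HOL-Analysis.Analysis"
begin

text \<open>Velocity space R^N is modelled as real^'n, with N = CARD('n).\<close>

definition dens :: "(real^'n::finite \<Rightarrow> real) \<Rightarrow> real" where
  "dens f = (LINT v|lborel. f v)"

definition mvel :: "(real^'n::finite \<Rightarrow> real) \<Rightarrow> real^'n" where
  "mvel f = (1 / dens f) *\<^sub>R (LINT v|lborel. f v *\<^sub>R v)"

definition temp :: "real \<Rightarrow> (real^'n::finite \<Rightarrow> real) \<Rightarrow> real" where
  "temp m f = (LINT v|lborel. m * (norm (v - mvel f))\<^sup>2 * f v) / (real CARD('n) * dens f)"

definition Nq :: "real \<Rightarrow> (real^'n::finite \<Rightarrow> real) \<Rightarrow> ereal" where
  "Nq q f = (SUP v. ereal (norm v powr q * f v))"

definition u12 :: "real \<Rightarrow> real^'n::finite \<Rightarrow> real^'n \<Rightarrow> real^'n" where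
  "u12 \<delta> u1 u2 = \<delta> *\<^sub>R u1 + (1 - \<delta>) *\<^sub>R u2"

definition u21 :: "real \<Rightarrow> real \<Rightarrow> real \<Rightarrow> real \<Rightarrow> real^'n::finite \<Rightarrow> real^'n \<Rightarrow> real^'n" where
  "u21 m1 m2 \<epsilon> \<delta> u1 u2 = u2 - (m1 / m2 * \<epsilon> * (1 - \<delta>)) *\<^sub>R (u2 - u1)"

definition T12 :: "real \<Rightarrow> real \<Rightarrow> real \<Rightarrow> real \<Rightarrow> real^'n::finite \<Rightarrow> real^'n \<Rightarrow> real" where
  "T12 \<alpha> \<gamma> T1 T2 u1 u2 = \<alpha> * T1 + (1 - \<alpha>) * T2 + \<gamma> * (norm (u1 - u2))\<^sup>2"

definition T21 :: "real \<Rightarrow> real \<Rightarrow> real \<Rightarrow> real \<Rightarrow> real \<Rightarrow> real \<Rightarrow> real \<Rightarrow> real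
     \<Rightarrow> real^'n::finite \<Rightarrow> real^'n \<Rightarrow> real" where
  "T21 m1 m2 \<epsilon> \<delta> \<alpha> \<gamma> T1 T2 u1 u2 =
     ((1 / real CARD('n)) * \<epsilon> * m1 * (1 - \<delta>) * (m1 / m2 * \<epsilon> * (\<delta> - 1) + \<delta> + 1) - \<epsilon> * \<gamma>)
        * (norm (u1 - u2))\<^sup>2
     + \<epsilon> * (1 - \<alpha>) * T1 + (1 - \<epsilon> * (1 - \<alpha>)) * T2"

end

theory Submission
  imports Defs
begin


lemma geo_term:
  fixes R q V :: real and N k :: nat
  assumes R: "R > 0"
  shows "(R*2^k) powr (2-q) * (V * (R*2^(k+1))^N) = V * 2^N * R powr (real N+2-q) * (2 powr (real N+2-q))^k"
proof -
  have a: "(R*2^k) powr (2-q) = R powr (2-q) * (2 powr (2-q))^k"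
    using R by (simp add: powr_mult powr_realpow[symmetric] powr_powr mult.commute flip: powr_realpow)
  have b: "(R*2^(k+1))^N = R powr N * 2^N * (2 powr N)^k"
    using R by (simp add: power_mult_distrib powr_realpow power_add flip: power_mult)
  have c: "R powr (2-q) * R powr N = R powr (real N+2-q)"
    using R by (simp add: powr_add[symmetric] algebra_simps)
  have d: "(2 powr (2-q))^k * (2 powr N)^k = (2 powr (real N+2-q))^k"
    by (simp add: power_mult_distrib[symmetric] powr_add[symmetric] algebra_simps)
  show ?thesis unfolding a b using c d by (simp add: algebra_simps)
qed

definition Kc :: "real \<Rightarrow> nat \<Rightarrow> real" where
  "Kc q N = unit_ball_vol (real N) * 2^N / (1 - 2 powr (real N + 2 - q))"

lemma geo_sum:
  fixes R q :: real and N :: nat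
  assumes R: "R > 0" and q: "q > real N + 2"
  shows "(\<Sum>k. ennreal ((R*2^k) powr (2-q) * (unit_ball_vol (real N) * (R*2^(k+1))^N)))
     = ennreal (Kc q N * R powr (real N + 2 - q))"
proof -
  define s where "s = 2 powr (real N + 2 - q)"
  have s0: "0 < s" and s1: "s < 1" using q by (auto simp: s_def intro!: powr_less_one)
  define c where "c = unit_ball_vol (real N) * 2^N * R powr (real N+2-q)"
  have c0: "c \<ge> 0" using R by (simp add: c_def)
  have eq: "\<And>k. (R*2^k) powr (2-q) * (unit_ball_vol (real N) * (R*2^(k+1))^N) = c * s^k"
    using geo_term[OF R] by (simp add: c_def s_def)
  have sm: "summable (\<lambda>k. c * s^k)"
    using s0 s1 by (intro summable_mult summable_geometric) simp
  have "(\<Sum>k. ennreal (c * s^k)) = ennreal (\<Sum>k. c * s^k)"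
    using s0 c0 sm by (intro suminf_ennreal2) auto
  also have "(\<Sum>k. c * s^k) = c * (1 / (1 - s))"
    using s0 s1 by (subst suminf_mult) (auto intro: summable_geometric simp: suminf_geometric)
  also have "\<dots> = Kc q N * R powr (real N + 2 - q)"
    by (simp add: c_def Kc_def s_def)
  finally show ?thesis by (simp only: eq)
qed

lemma Kc_pos: "q > real N + 2 \<Longrightarrow> Kc q N > 0"
  unfolding Kc_def by (intro divide_pos_pos mult_pos_pos) (auto intro!: powr_less_one)

lemma tail_nn:
  fixes f :: "'a::euclidean_space \<Rightarrow> real" and q M R :: real
  assumes f0: "\<And>v. f v \<ge> 0" and fm: "f \<in> borel_measurable lborel"
    and bnd: "\<And>v. norm v powr q * f v \<le> M" and q: "q > real DIM('a) + 2" and R: "R > 0"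
  shows "(\<integral>\<^sup>+v. ennreal (norm v ^ 2 * f v) \<partial>lborel)
     \<le> ennreal (R^2) * (\<integral>\<^sup>+v. ennreal (f v) \<partial>lborel)
       + ennreal (M * (Kc q DIM('a) * R powr (real DIM('a) + 2 - q)))"
proof -
  have [measurable]: "f \<in> borel_measurable lborel" by fact
  have M0: "M \<ge> 0" using bnd[of 0] by simp
  define g where "g k v = ennreal ((R*2^k) powr (2-q)) * indicator (ball (0::'a) (R*2^(k+1))) v" for k v
  have gm[measurable]: "\<And>k. g k \<in> borel_measurable lborel" unfolding g_def by (intro borel_measurable_times_ennreal borel_measurable_indicator measurable_const) auto
  have pw: "ennreal (norm v^2 * f v) \<le> ennreal (R^2) * ennreal (f v) + ennreal M * (\<Sum>k. g k v)" for v
  proof (cases "norm v < R")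
    case True
    have "norm v^2 * f v \<le> R^2 * f v"
      using True f0[of v] by (intro mult_right_mono power_mono) auto
    hence "ennreal (norm v^2 * f v) \<le> ennreal (R^2 * f v)"
      by (rule ennreal_leI)
    also have "\<dots> = ennreal (R^2) * ennreal (f v)" using f0[of v] by (simp add: ennreal_mult)
    finally have "ennreal (norm v^2 * f v) \<le> ennreal (R^2) * ennreal (f v)" .
    thus ?thesis by (intro add_increasing2) auto
  next
    case False
    hence nv: "norm v \<ge> R" "norm v > 0" using R by auto
    define x where "x = norm v / R"
    have x1: "x \<ge> 1" using nv R by (simp add: x_def)
    define k' where "k' = \<lfloor>log 2 x\<rfloor>"
    have k'0: "k' \<ge> 0" using x1 by (simp add: k'_def)
    have kb: "2 powr k' \<le> x \<and> x < 2 powr (k' + 1)"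
      using floor_log_eq_powr_iff[of x 2 k'] x1 by (simp add: k'_def)
    define k where "k = nat k'"
    have kk: "real k = of_int k'" using k'0 by (simp add: k_def)
    have p1: "2 powr (real k) = 2^k" by (simp add: powr_realpow)
    have p2: "2 powr (1 + real k) = 2 * 2^k" using powr_realpow[of 2 "k+1"] by (simp add: add.commute)
    have hk: "R*2^k \<le> norm v" "norm v < R*2^(k+1)"
      using kb R unfolding x_def by (simp_all add: kk[symmetric] p1 p2 field_simps)
    have "norm v^2 * f v = norm v powr (2-q) * (norm v powr q * f v)"
    proof -
      have "norm v ^ 2 = norm v powr 2" using nv by (simp add: powr_numeral)
      also have "\<dots> = norm v powr (2-q) * norm v powr q" by (simp add: powr_add[symmetric])
      finally show ?thesis by simp
    qed
    also have "\<dots> \<le> norm v powr (2-q) * M"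
      by (intro mult_left_mono bnd) auto
    also have "\<dots> \<le> (R*2^k) powr (2-q) * M"
      using q M0 R hk by (intro mult_right_mono powr_mono2') auto
    finally have "ennreal (norm v^2 * f v) \<le> ennreal ((R*2^k) powr (2-q) * M)"
      by (rule ennreal_leI)
    also have "\<dots> = ennreal M * g k v"
      using hk M0 by (simp add: g_def mult.commute ennreal_mult)
    also have "g k v \<le> (\<Sum>k. g k v)"
      using sum_le_suminf[of "\<lambda>k. g k v" "{k}"] by (simp add: summableI)
    hence "ennreal M * g k v \<le> ennreal M * (\<Sum>k. g k v)"
      by (intro mult_left_mono) auto
    finally show ?thesis by (intro add_increasing) auto
  qed
  have "(\<integral>\<^sup>+v. ennreal (norm v ^ 2 * f v) \<partial>lborel)
     \<le> (\<integral>\<^sup>+v. ennreal (R^2) * ennreal (f v) + ennreal M * (\<Sum>k. g k v) \<partial>lborel)"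
    by (intro nn_integral_mono pw)
  also have "\<dots> = ennreal (R^2) * (\<integral>\<^sup>+v. ennreal (f v) \<partial>lborel) + ennreal M * (\<Sum>k. \<integral>\<^sup>+v. g k v \<partial>lborel)"
    by (simp add: nn_integral_add nn_integral_cmult nn_integral_suminf)
  also have "(\<lambda>k. \<integral>\<^sup>+v. g k v \<partial>lborel) = (\<lambda>k. ennreal ((R*2^k) powr (2-q) * (unit_ball_vol (real DIM('a)) * (R*2^(k+1))^DIM('a))))"
    using R by (auto simp: g_def nn_integral_cmult_indicator emeasure_ball ennreal_mult' intro!: ext)
  also have "(\<Sum>k. ennreal ((R*2^k) powr (2-q) * (unit_ball_vol (real DIM('a)) * (R*2^(k+1))^DIM('a))))
      = ennreal (Kc q DIM('a) * R powr (real DIM('a) + 2 - q))"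
    by (rule geo_sum[OF R q])
  finally show ?thesis using M0 by (simp add: ennreal_mult')
qed



lemma basic_int:
  fixes f :: "real^'n::finite \<Rightarrow> real"
  assumes f0: "\<And>v. f v \<ge> 0" and fi: "integrable lborel (\<lambda>v. (1 + (norm v)\<^sup>2) * f v)"
  shows "f \<in> borel_measurable lborel" "integrable lborel f"
    "integrable lborel (\<lambda>v. (norm v)\<^sup>2 * f v)" "integrable lborel (\<lambda>v. f v *\<^sub>R v)"
proof -
  have m1: "(\<lambda>v. (1 + (norm v)\<^sup>2) * f v) \<in> borel_measurable lborel"
    using fi by (rule borel_measurable_integrable)
  have "(\<lambda>v. ((1 + (norm v)\<^sup>2) * f v) / (1 + (norm v)\<^sup>2)) \<in> borel_measurable lborel"
    using m1 by measurable
  moreover have "(\<lambda>v. ((1 + (norm v)\<^sup>2) * f v) / (1 + (norm v)\<^sup>2)) = f"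
  proof
    fix v :: "real^'n"
    have "1 + (norm v)\<^sup>2 \<noteq> 0" by (smt (verit) zero_le_power2)
    thus "((1 + (norm v)\<^sup>2) * f v) / (1 + (norm v)\<^sup>2) = f v" by simp
  qed
  ultimately show fm: "f \<in> borel_measurable lborel" by simp
  have fb: "f v \<le> (1 + (norm v)\<^sup>2) * f v" for v using f0[of v] by (simp add: algebra_simps)
  show "integrable lborel f"
    using fm by (intro Bochner_Integration.integrable_bound[OF fi]) (auto simp: f0 abs_mult fb)
  show "integrable lborel (\<lambda>v. (norm v)\<^sup>2 * f v)"
    using fi fm by (intro Bochner_Integration.integrable_bound[OF fi]) (auto simp: f0 abs_mult intro!: mult_right_mono)
  have nb: "norm v \<le> 1 + (norm v)\<^sup>2" for v :: "real^'n"
  proof -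
    have "0 \<le> (norm v - 1)\<^sup>2" by simp
    hence "2 * norm v \<le> (norm v)\<^sup>2 + 1" by (simp add: power2_diff)
    thus ?thesis using norm_ge_zero[of v] by linarith
  qed
  have fb2: "f v * norm v \<le> (1 + (norm v)\<^sup>2) * f v" for v
    using mult_left_mono[OF nb f0[of v], of v] by (simp add: mult.commute)
  show "integrable lborel (\<lambda>v. f v *\<^sub>R v)"
    using fm by (intro Bochner_Integration.integrable_bound[OF fi]) (auto simp: f0 abs_mult fb2)
qed

lemma moment_bound:
  fixes f :: "real^'n::finite \<Rightarrow> real" and m :: real
  assumes f0: "\<And>v. f v \<ge> 0" and fi: "integrable lborel (\<lambda>v. (1 + (norm v)\<^sup>2) * f v)"
    and n0: "dens f > 0" and m: "m > 0"
  shows "temp m f \<ge> 0"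
    "dens f * (temp m f + (norm (mvel f))\<^sup>2) \<le> max (m / real CARD('n)) 1 * (LINT v|lborel. (norm v)\<^sup>2 * f v)"
proof -
  note I = basic_int[OF f0 fi]
  define n where "n = dens f"
  define w where "w = (LINT v|lborel. f v *\<^sub>R v)"
  define u where "u = mvel f"
  define E where "E = (LINT v|lborel. (norm v)\<^sup>2 * f v)"
  define N where "N = real CARD('n)"
  have N0: "N > 0" by (simp add: N_def)
  have nu: "n *\<^sub>R u = w" using n0 by (simp add: u_def mvel_def w_def n_def)
  have pt: "(norm (v - u))\<^sup>2 * f v = (norm v)\<^sup>2 * f v - 2 * ((f v *\<^sub>R v) \<bullet> u) + (norm u)\<^sup>2 * f v" for v
    by (simp add: power2_norm_eq_inner inner_diff_left inner_diff_right inner_commute algebra_simps)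
  have J: "(LINT v|lborel. (norm (v - u))\<^sup>2 * f v) = E - n * (norm u)\<^sup>2"
  proof -
    have "(LINT v|lborel. (norm (v - u))\<^sup>2 * f v) = (LINT v|lborel. (norm v)\<^sup>2 * f v - 2 * ((f v *\<^sub>R v) \<bullet> u) + (norm u)\<^sup>2 * f v)"
      by (simp only: pt)
    also have "\<dots> = E - 2 * (w \<bullet> u) + (norm u)\<^sup>2 * n"
      using I by (simp del: inner_scaleR_left add: E_def w_def n_def dens_def)
    also have "w \<bullet> u = n * (norm u)\<^sup>2" by (simp add: nu[symmetric] power2_norm_eq_inner)
    finally show ?thesis by simp
  qed
  have J0: "E - n * (norm u)\<^sup>2 \<ge> 0"
    using J[symmetric] f0 by simp
  have T: "temp m f = m * (E - n * (norm u)\<^sup>2) / (N * n)"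
    unfolding temp_def using J by (simp add: mult.assoc u_def N_def n_def)
  show "temp m f \<ge> 0" unfolding T using J0 m N0 n0 by (simp add: n_def)
  have "n * (temp m f + (norm u)\<^sup>2) = (m / N) * (E - n * (norm u)\<^sup>2) + n * (norm u)\<^sup>2"
    unfolding T using N0 n0 by (simp add: field_simps n_def)
  also have "\<dots> \<le> max (m / N) 1 * (E - n * (norm u)\<^sup>2) + max (m / N) 1 * (n * (norm u)\<^sup>2)"
  proof (rule add_mono)
    show "m / N * (E - n * (norm u)\<^sup>2) \<le> max (m / N) 1 * (E - n * (norm u)\<^sup>2)"
      using J0 by (intro mult_right_mono) auto
    show "n * (norm u)\<^sup>2 \<le> max (m / N) 1 * (n * (norm u)\<^sup>2)"
      using mult_right_mono[of 1 "max (m / N) 1" "n*(norm u)\<^sup>2"] n0 by (simp add: n_def)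
  qed
  also have "\<dots> = max (m / N) 1 * E" by (simp add: algebra_simps)
  finally show "dens f * (temp m f + (norm (mvel f))\<^sup>2) \<le> max (m / real CARD('n)) 1 * (LINT v|lborel. (norm v)\<^sup>2 * f v)"
    by (simp add: n_def u_def E_def N_def)
qed


definition Cs :: "real \<Rightarrow> real \<Rightarrow> nat \<Rightarrow> real" where
  "Cs m q N = (max (m / real N) 1 * (1 + Kc q N)) powr ((q - real N) / 2)"

lemma Nq_ge: "ereal (norm v powr q * f v) \<le> Nq q f"
  unfolding Nq_def by (rule SUP_upper) simp

lemma single_bound:
  fixes f :: "real^'n::finite \<Rightarrow> real" and m q M :: real
  assumes f0: "\<And>v. f v \<ge> 0" and fi: "integrable lborel (\<lambda>v. (1 + (norm v)\<^sup>2) * f v)"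
    and n0: "dens f > 0" and m: "m > 0" and q: "q > real CARD('n) + 2"
    and NM: "Nq q f = ereal M"
  shows "dens f * (temp m f + (norm (mvel f))\<^sup>2) powr ((q - real CARD('n)) / 2) \<le> Cs m q CARD('n) * M"
proof -
  note I = basic_int[OF f0 fi]
  note MB = moment_bound[OF f0 fi n0 m]
  define n where "n = dens f"
  define E where "E = (LINT v|lborel. (norm v)\<^sup>2 * f v)"
  define X where "X = temp m f + (norm (mvel f))\<^sup>2"
  define N where "N = real CARD('n)"
  define c where "c = max (m / N) 1"
  define K where "K = Kc q CARD('n)"
  define e where "e = (q - N) / 2"
  have K0: "K > 0" using Kc_pos[of "CARD('n)" q] q by (simp add: K_def)
  have c1: "c \<ge> 1" by (simp add: c_def)
  have e0: "e > 0" using q by (simp add: e_def N_def)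
  have X0: "X \<ge> 0" using MB(1) by (simp add: X_def)
  have nX: "n * X \<le> c * E" using MB(2) by (simp add: n_def X_def c_def E_def N_def)
  have bnd: "norm v powr q * f v \<le> M" for v using Nq_ge[of v q f] NM by simp
  have M0: "M \<ge> 0" using bnd[of 0] by simp
  have E0: "E \<ge> 0" unfolding E_def using f0 by simp
  have tail: "E \<le> R^2 * n + M * (K * R powr (N + 2 - q))" if R: "R > 0" for R
  proof -
    have "ennreal E = (\<integral>\<^sup>+v. ennreal (norm v ^ 2 * f v) \<partial>lborel)"
      unfolding E_def using I(3) f0 by (subst nn_integral_eq_integral) auto
    also have "\<dots> \<le> ennreal (R^2) * (\<integral>\<^sup>+v. ennreal (f v) \<partial>lborel)
       + ennreal (M * (K * R powr (N + 2 - q)))"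
      using tail_nn[OF f0 I(1) bnd _ R] q by (simp add: K_def N_def)
    also have "(\<integral>\<^sup>+v. ennreal (f v) \<partial>lborel) = ennreal n"
      unfolding n_def dens_def using I(2) f0 by (subst nn_integral_eq_integral) auto
    also have "ennreal (R^2) * ennreal n = ennreal (R^2 * n)" using n0 by (intro ennreal_mult[symmetric]) (auto simp: n_def)
    also have "ennreal (R^2 * n) + ennreal (M * (K * R powr (N + 2 - q))) = ennreal (R^2 * n + M * (K * R powr (N + 2 - q)))"
      using M0 K0 n0 by (intro ennreal_plus[symmetric]) (auto simp: n_def)
    finally have "ennreal E \<le> ennreal (R^2 * n + M * (K * R powr (N + 2 - q)))" .
    thus ?thesis using n0 M0 K0 by (subst (asm) ennreal_le_iff) (auto simp: n_def intro!: add_nonneg_nonneg)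
  qed
  show ?thesis
  proof (cases "M = 0")
    case True
    have "E \<le> 0"
    proof (rule ccontr)
      assume "\<not> E \<le> 0"
      hence Ep: "E > 0" by simp
      define R where "R = sqrt (E / (2 * n))"
      have Rp: "R > 0" using Ep n0 by (simp add: R_def n_def)
      have "R^2 * n = E / 2" using Ep n0 by (simp add: R_def n_def)
      thus False using tail[OF Rp] True Ep by simp
    qed
    hence "c * E \<le> 0" using c1 by (simp add: mult_nonneg_nonpos)
    hence "n * X \<le> 0" using nX by linarith
    hence "X = 0" using X0 n0 by (simp add: n_def mult_le_0_iff)
    thus ?thesis using True by (simp add: X_def)
  next
    case False
    hence Mp: "M > 0" using M0 by simp
    have np: "n > 0" using n0 by (simp add: n_def)
    have qN: "q - N > 0" using q by (simp add: N_def)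
    define R where "R = (M / n) powr (1 / (q - N))"
    have Rp: "R > 0" using Mp np by (simp add: R_def)
    have RqN: "R powr (q - N) = M / n"
      using Mp np qN by (simp add: R_def powr_powr)
    have "M * R powr (N + 2 - q) = n * (R powr (q - N) * R powr (N + 2 - q))"
      using np by (simp add: RqN)
    also have "R powr (q - N) * R powr (N + 2 - q) = R^2"
      using Rp by (simp add: powr_add[symmetric] powr_numeral)
    finally have MR: "M * R powr (N + 2 - q) = n * R^2" .
    have MK: "M * (K * R powr (N + 2 - q)) = K * (n * R^2)"
      using MR by (simp add: mult.left_commute)
    have "E \<le> R^2 * n + K * (n * R^2)" using tail[OF Rp] unfolding MK .
    also have "\<dots> = (1 + K) * (n * R^2)" by (simp add: algebra_simps)
    finally have "c * E \<le> c * ((1 + K) * (n * R^2))"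
      using c1 by (intro mult_left_mono) auto
    hence "n * X \<le> n * (c * (1 + K) * R^2)"
      using nX by (simp add: algebra_simps)
    hence XR: "X \<le> c * (1 + K) * R^2"
      using np by (simp add: mult_le_cancel_left_pos)
    have "X powr e \<le> (c * (1 + K) * R^2) powr e"
      using X0 e0 XR by (intro powr_mono2) auto
    also have "\<dots> = (c * (1 + K)) powr e * (R powr 2) powr e"
      using c1 K0 Rp by (simp add: powr_mult powr_numeral)
    also have "(R powr 2) powr e = M / n"
    proof -
      have "2 * ((q - N) / 2) = q - N" by simp
      thus ?thesis using RqN unfolding powr_powr e_def by metis
    qed
    finally have "X powr e \<le> (c * (1 + K)) powr e * (M / n)" .
    hence "n * X powr e \<le> n * ((c * (1 + K)) powr e * (M / n))"
      using np by (intro mult_left_mono) auto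
    also have "\<dots> = (c * (1 + K)) powr e * M" using np by simp
    finally show ?thesis by (simp add: X_def n_def Cs_def c_def K_def e_def N_def)
  qed
qed

lemma norm_add_sq: "(norm (x + y :: 'a::real_normed_vector))\<^sup>2 \<le> 2 * (norm x)\<^sup>2 + 2 * (norm y)\<^sup>2"
proof -
  have "norm (x + y) \<le> norm x + norm y" by (rule norm_triangle_ineq)
  hence "(norm (x + y))\<^sup>2 \<le> (norm x + norm y)\<^sup>2" by (intro power_mono) auto
  also have "\<dots> \<le> 2 * (norm x)\<^sup>2 + 2 * (norm y)\<^sup>2"
    using zero_le_power2[of "norm x - norm y"] by (simp add: power2_diff power2_sum)
  finally show ?thesis .
qed

lemma norm_comb_sq: "(norm (a *\<^sub>R x + b *\<^sub>R (y :: 'a::real_normed_vector)))\<^sup>2 \<le> 2 * a\<^sup>2 * (norm x)\<^sup>2 + 2 * b\<^sup>2 * (norm y)\<^sup>2"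
  using norm_add_sq[of "a *\<^sub>R x" "b *\<^sub>R y"] by (simp add: power_mult_distrib)

lemma norm_diff_sq: "(norm (x - y :: 'a::real_normed_vector))\<^sup>2 \<le> 2 * (norm x)\<^sup>2 + 2 * (norm y)\<^sup>2"
  using norm_add_sq[of x "- y"] by simp

lemma lin4:
  fixes T1 T2 s1 s2 A p1 p2 :: real
  assumes "T1 \<ge> 0" "T2 \<ge> 0" "s1 \<ge> 0" "s2 \<ge> 0" "A \<ge> 1" "A \<ge> p1" "A \<ge> p2"
  shows "T1 + T2 + p1 * s1 + p2 * s2 \<le> A * ((T1 + s1) + (T2 + s2))"
proof -
  have "T1 \<le> A * T1" using mult_right_mono[of 1 A T1] assms by simp
  moreover have "T2 \<le> A * T2" using mult_right_mono[of 1 A T2] assms by simp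
  moreover have "p1 * s1 \<le> A * s1" using mult_right_mono[of p1 A s1] assms by simp
  moreover have "p2 * s2 \<le> A * s2" using mult_right_mono[of p2 A s2] assms by simp
  ultimately show ?thesis by (simp add: algebra_simps)
qed

lemma YA_bound:
  fixes T1 T2 \<alpha> \<gamma> \<delta> A :: real and u1 u2 :: "real^'n::finite"
  assumes T: "T1 \<ge> 0" "T2 \<ge> 0" and al: "0 \<le> \<alpha>" "\<alpha> \<le> 1" and g: "\<gamma> \<ge> 0"
    and A: "A \<ge> 1" "A \<ge> 2 * \<gamma> + 2 * \<delta>\<^sup>2" "A \<ge> 2 * \<gamma> + 2 * (1 - \<delta>)\<^sup>2"
  shows "T12 \<alpha> \<gamma> T1 T2 u1 u2 + (norm (u12 \<delta> u1 u2))\<^sup>2 \<ge> 0"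
    "T12 \<alpha> \<gamma> T1 T2 u1 u2 + (norm (u12 \<delta> u1 u2))\<^sup>2 \<le> A * ((T1 + (norm u1)\<^sup>2) + (T2 + (norm u2)\<^sup>2))"
proof -
  have t1: "\<alpha> * T1 \<le> T1" using mult_right_mono[of \<alpha> 1 T1] al T by simp
  have t2: "(1 - \<alpha>) * T2 \<le> T2" using mult_right_mono[of "1 - \<alpha>" 1 T2] al T by simp
  have d: "\<gamma> * (norm (u1 - u2))\<^sup>2 \<le> \<gamma> * (2 * (norm u1)\<^sup>2 + 2 * (norm u2)\<^sup>2)"
    using g norm_diff_sq[of u1 u2] by (intro mult_left_mono) auto
  have w: "(norm (u12 \<delta> u1 u2))\<^sup>2 \<le> 2 * \<delta>\<^sup>2 * (norm u1)\<^sup>2 + 2 * (1 - \<delta>)\<^sup>2 * (norm u2)\<^sup>2"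
    unfolding u12_def by (rule norm_comb_sq)
  have "T12 \<alpha> \<gamma> T1 T2 u1 u2 + (norm (u12 \<delta> u1 u2))\<^sup>2 \<le>
      T1 + T2 + (2 * \<gamma> + 2 * \<delta>\<^sup>2) * (norm u1)\<^sup>2 + (2 * \<gamma> + 2 * (1 - \<delta>)\<^sup>2) * (norm u2)\<^sup>2"
    using t1 t2 d w unfolding T12_def by (simp add: algebra_simps)
  also have "\<dots> \<le> A * ((T1 + (norm u1)\<^sup>2) + (T2 + (norm u2)\<^sup>2))"
    using T A by (intro lin4) auto
  finally show "T12 \<alpha> \<gamma> T1 T2 u1 u2 + (norm (u12 \<delta> u1 u2))\<^sup>2 \<le> A * ((T1 + (norm u1)\<^sup>2) + (T2 + (norm u2)\<^sup>2))" .
  show "T12 \<alpha> \<gamma> T1 T2 u1 u2 + (norm (u12 \<delta> u1 u2))\<^sup>2 \<ge> 0"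
    using T al g unfolding T12_def by (intro add_nonneg_nonneg) auto
qed

lemma YB_bound:
  fixes T1 T2 \<alpha> \<gamma> \<delta> \<epsilon> m1 m2 A :: real and u1 u2 :: "real^'n::finite"
  defines "a \<equiv> (1 / real CARD('n)) * \<epsilon> * m1 * (1 - \<delta>) * (m1 / m2 * \<epsilon> * (\<delta> - 1) + \<delta> + 1) - \<epsilon> * \<gamma>"
    and "b \<equiv> m1 / m2 * \<epsilon> * (1 - \<delta>)"
  assumes T: "T1 \<ge> 0" "T2 \<ge> 0" and al: "0 \<le> \<alpha>" "\<alpha> \<le> 1" and ep: "0 < \<epsilon>" "\<epsilon> \<le> 1"
    and a0: "a \<ge> 0"
    and A: "A \<ge> 1" "A \<ge> 2 * a + 2 * b\<^sup>2" "A \<ge> 2 * a + 2 * (1 - b)\<^sup>2"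
  shows "T21 m1 m2 \<epsilon> \<delta> \<alpha> \<gamma> T1 T2 u1 u2 + (norm (u21 m1 m2 \<epsilon> \<delta> u1 u2))\<^sup>2 \<ge> 0"
    "T21 m1 m2 \<epsilon> \<delta> \<alpha> \<gamma> T1 T2 u1 u2 + (norm (u21 m1 m2 \<epsilon> \<delta> u1 u2))\<^sup>2 \<le> A * ((T1 + (norm u1)\<^sup>2) + (T2 + (norm u2)\<^sup>2))"
proof -
  have eT: "T21 m1 m2 \<epsilon> \<delta> \<alpha> \<gamma> T1 T2 u1 u2 = a * (norm (u1 - u2))\<^sup>2 + \<epsilon> * (1 - \<alpha>) * T1 + (1 - \<epsilon> * (1 - \<alpha>)) * T2"
    unfolding T21_def a_def ..
  have eu: "u21 m1 m2 \<epsilon> \<delta> u1 u2 = b *\<^sub>R u1 + (1 - b) *\<^sub>R u2"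
    unfolding u21_def b_def by (simp add: algebra_simps)
  have c0: "0 \<le> \<epsilon> * (1 - \<alpha>)" "\<epsilon> * (1 - \<alpha>) \<le> 1"
    using ep al by (auto intro: mult_le_one)
  have t1: "\<epsilon> * (1 - \<alpha>) * T1 \<le> T1" using mult_right_mono[of "\<epsilon> * (1 - \<alpha>)" 1 T1] c0 T by simp
  have t2: "(1 - \<epsilon> * (1 - \<alpha>)) * T2 \<le> T2" using mult_right_mono[of "1 - \<epsilon> * (1 - \<alpha>)" 1 T2] c0 T by simp
  have d: "a * (norm (u1 - u2))\<^sup>2 \<le> a * (2 * (norm u1)\<^sup>2 + 2 * (norm u2)\<^sup>2)"
    using a0 norm_diff_sq[of u1 u2] by (intro mult_left_mono) auto
  have w: "(norm (u21 m1 m2 \<epsilon> \<delta> u1 u2))\<^sup>2 \<le> 2 * b\<^sup>2 * (norm u1)\<^sup>2 + 2 * (1 - b)\<^sup>2 * (norm u2)\<^sup>2"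
    unfolding eu by (rule norm_comb_sq)
  have "T21 m1 m2 \<epsilon> \<delta> \<alpha> \<gamma> T1 T2 u1 u2 + (norm (u21 m1 m2 \<epsilon> \<delta> u1 u2))\<^sup>2 \<le>
      T1 + T2 + (2 * a + 2 * b\<^sup>2) * (norm u1)\<^sup>2 + (2 * a + 2 * (1 - b)\<^sup>2) * (norm u2)\<^sup>2"
    using t1 t2 d w unfolding eT by (simp add: algebra_simps)
  also have "\<dots> \<le> A * ((T1 + (norm u1)\<^sup>2) + (T2 + (norm u2)\<^sup>2))"
    using T A by (intro lin4) auto
  finally show "T21 m1 m2 \<epsilon> \<delta> \<alpha> \<gamma> T1 T2 u1 u2 + (norm (u21 m1 m2 \<epsilon> \<delta> u1 u2))\<^sup>2 \<le> A * ((T1 + (norm u1)\<^sup>2) + (T2 + (norm u2)\<^sup>2))" .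
  show "T21 m1 m2 \<epsilon> \<delta> \<alpha> \<gamma> T1 T2 u1 u2 + (norm (u21 m1 m2 \<epsilon> \<delta> u1 u2))\<^sup>2 \<ge> 0"
    unfolding eT using T c0 a0 by (intro add_nonneg_nonneg) auto
qed

lemma comb:
  fixes n Y A X1 X2 e :: real
  assumes "n > 0" "Y \<ge> 0" "Y \<le> A * (X1 + X2)" "A > 0" "e > 0" "X1 \<ge> 0" "X2 \<ge> 0"
  shows "n * Y powr e \<le> (2 * A) powr e * (n * X1 powr e + n * X2 powr e)"
proof -
  have "Y powr e \<le> (A * (X1 + X2)) powr e" using assms by (intro powr_mono2) auto
  also have "\<dots> \<le> (2 * A * max X1 X2) powr e"
    using assms by (intro powr_mono2) (auto simp: max_def)
  also have "\<dots> = (2 * A) powr e * (max X1 X2) powr e"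
    using assms by (simp add: powr_mult max_def)
  also have "(max X1 X2) powr e \<le> X1 powr e + X2 powr e"
    by (simp add: max_def)
  hence "(2 * A) powr e * (max X1 X2) powr e \<le> (2 * A) powr e * (X1 powr e + X2 powr e)"
    by (intro mult_left_mono) auto
  finally have "Y powr e \<le> (2 * A) powr e * (X1 powr e + X2 powr e)" .
  hence "n * Y powr e \<le> n * ((2 * A) powr e * (X1 powr e + X2 powr e))"
    using assms by (intro mult_left_mono) auto
  thus ?thesis by (simp add: algebra_simps)
qed

lemma ereal_goal:
  assumes "0 \<le> x" "C > 0" "\<And>M. x = ereal M \<Longrightarrow> y \<le> C * M"
  shows "ereal y \<le> ereal C * x"
  using assms by (cases x) auto

lemma ereal_goal2:
  assumes "0 \<le> x1" "0 \<le> x2" "C > 0" "k > 0" "\<And>M1 M2. x1 = ereal M1 \<Longrightarrow> x2 = ereal M2 \<Longrightarrow> y \<le> C * (M1 + k * M2)"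
  shows "ereal y \<le> ereal C * (x1 + ereal k * x2)"
  using assms by (cases x1; cases x2) auto

theorem mainTheorem2:
  fixes m1 m2 \<epsilon> \<alpha> \<delta> \<gamma> q :: real
  assumes "m1 > 0" and "m2 > 0"
    and "0 < \<epsilon>" and "\<epsilon> \<le> 1"
    and "0 \<le> \<alpha>" and "\<alpha> \<le> 1"
    and "(m1 / m2 * \<epsilon> - 1) / (1 + m1 / m2 * \<epsilon>) \<le> \<delta>" and "\<delta> \<le> 1"
    and "0 \<le> \<gamma>"
    and "\<gamma> \<le> m1 / real CARD('n::finite) * (1 - \<delta>)
                 * ((1 + m1 / m2 * \<epsilon>) * \<delta> + 1 - m1 / m2 * \<epsilon>)"
    and "q > real CARD('n) + 2"
  shows "\<exists>C > 0. \<forall>f1 f2 :: real^'n \<Rightarrow> real.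
     (\<forall>v. f1 v \<ge> 0) \<and> (\<forall>v. f2 v \<ge> 0) \<and>
     integrable lborel (\<lambda>v. (1 + (norm v)\<^sup>2) * f1 v) \<and>
     integrable lborel (\<lambda>v. (1 + (norm v)\<^sup>2) * f2 v) \<and>
     dens f1 > 0 \<and> dens f2 > 0
     \<longrightarrow>
     (let n1 = dens f1; n2 = dens f2; u1 = mvel f1; u2 = mvel f2;
          T1 = temp m1 f1; T2 = temp m2 f2; e = (q - real CARD('n)) / 2;
          uA = u12 \<delta> u1 u2; uB = u21 m1 m2 \<epsilon> \<delta> u1 u2;
          TA = T12 \<alpha> \<gamma> T1 T2 u1 u2; TB = T21 m1 m2 \<epsilon> \<delta> \<alpha> \<gamma> T1 T2 u1 u2
      in ereal (n1 * (T1 + (norm u1)\<^sup>2) powr e) \<le> ereal C * Nq q f1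
       \<and> ereal (n2 * (T2 + (norm u2)\<^sup>2) powr e) \<le> ereal C * Nq q f2
       \<and> ereal (n1 * (TA + (norm uA)\<^sup>2) powr e) \<le> ereal C * (Nq q f1 + ereal (n1 / n2) * Nq q f2)
       \<and> ereal (n2 * (TB + (norm uB)\<^sup>2) powr e) \<le> ereal C * (ereal (n2 / n1) * Nq q f1 + Nq q f2))"
proof -
  note as = assms
  define N where "N = real CARD('n)"
  define e where "e = (q - N) / 2"
  define a where "a = (1 / real CARD('n)) * \<epsilon> * m1 * (1 - \<delta>) * (m1 / m2 * \<epsilon> * (\<delta> - 1) + \<delta> + 1) - \<epsilon> * \<gamma>"
  define b where "b = m1 / m2 * \<epsilon> * (1 - \<delta>)"
  define A where "A = 1 + 2 * \<gamma> + 2 * \<delta>\<^sup>2 + 2 * (1 - \<delta>)\<^sup>2 + 2 * a + 2 * b\<^sup>2 + 2 * (1 - b)\<^sup>2"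
  have e0: "e > 0" using as(11) by (simp add: e_def N_def)
  have a0: "a \<ge> 0"
  proof -
    have eq: "(1 + m1 / m2 * \<epsilon>) * \<delta> + 1 - m1 / m2 * \<epsilon> = m1 / m2 * \<epsilon> * (\<delta> - 1) + \<delta> + 1"
      by (simp add: algebra_simps)
        (simp add: diff_divide_distrib add_divide_distrib)
    have "\<gamma> \<le> m1 / real CARD('n) * (1 - \<delta>) * (m1 / m2 * \<epsilon> * (\<delta> - 1) + \<delta> + 1)"
      using as(10) by (simp only: eq)
    hence "\<gamma> \<le> (1 / real CARD('n)) * m1 * (1 - \<delta>) * (m1 / m2 * \<epsilon> * (\<delta> - 1) + \<delta> + 1)"
      by simp
    hence "\<epsilon> * \<gamma> \<le> \<epsilon> * ((1 / real CARD('n)) * m1 * (1 - \<delta>) * (m1 / m2 * \<epsilon> * (\<delta> - 1) + \<delta> + 1))"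
      using as(3) by (intro mult_left_mono) auto
    moreover have "(1 / real CARD('n)) * \<epsilon> * m1 * (1 - \<delta>) * (m1 / m2 * \<epsilon> * (\<delta> - 1) + \<delta> + 1)
      = \<epsilon> * ((1 / real CARD('n)) * m1 * (1 - \<delta>) * (m1 / m2 * \<epsilon> * (\<delta> - 1) + \<delta> + 1))"
      by (simp only: mult_ac)
    ultimately show ?thesis unfolding a_def by linarith
  qed
  have A1: "A \<ge> 1" using as(9) a0 by (simp add: A_def)
  have Ap: "A > 0" using A1 by simp
  define C0 where "C0 = max (Cs m1 q CARD('n)) (Cs m2 q CARD('n))"
  have C00: "C0 \<ge> 0" unfolding C0_def Cs_def by (rule order_trans[OF _ max.cobounded1]) simp
  define C where "C = (1 + (2 * A) powr e) * (C0 + 1)"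
  have Cp: "C > 0" using C00 by (simp add: C_def add_pos_nonneg)
  have CC0: "C0 \<le> C"
  proof -
    have "1 * (C0 + 1) \<le> (1 + (2 * A) powr e) * (C0 + 1)"
      using C00 by (intro mult_right_mono) auto
    thus ?thesis by (simp add: C_def)
  qed
  have CA: "(2 * A) powr e * C0 \<le> C"
  proof -
    have "(2 * A) powr e * C0 \<le> (1 + (2 * A) powr e) * (C0 + 1)"
      using C00 by (intro mult_mono) auto
    thus ?thesis by (simp add: C_def)
  qed
  show ?thesis
  proof (intro exI[of _ C] conjI allI impI)
    show "C > 0" by (rule Cp)
    fix f1 f2 :: "real^'n \<Rightarrow> real"
    assume H: "(\<forall>v. f1 v \<ge> 0) \<and> (\<forall>v. f2 v \<ge> 0) \<and>
     integrable lborel (\<lambda>v. (1 + (norm v)\<^sup>2) * f1 v) \<and>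
     integrable lborel (\<lambda>v. (1 + (norm v)\<^sup>2) * f2 v) \<and>
     dens f1 > 0 \<and> dens f2 > 0"
    hence f10: "\<And>v. f1 v \<ge> 0" and f20: "\<And>v. f2 v \<ge> 0"
      and fi1: "integrable lborel (\<lambda>v. (1 + (norm v)\<^sup>2) * f1 v)"
      and fi2: "integrable lborel (\<lambda>v. (1 + (norm v)\<^sup>2) * f2 v)"
      and n10: "dens f1 > 0" and n20: "dens f2 > 0" by auto
    define n1 where "n1 = dens f1"
    define n2 where "n2 = dens f2"
    define u1 where "u1 = mvel f1"
    define u2 where "u2 = mvel f2"
    define T1 where "T1 = temp m1 f1"
    define T2 where "T2 = temp m2 f2"
    define X1 where "X1 = T1 + (norm u1)\<^sup>2"
    define X2 where "X2 = T2 + (norm u2)\<^sup>2"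
    define YA where "YA = T12 \<alpha> \<gamma> T1 T2 u1 u2 + (norm (u12 \<delta> u1 u2))\<^sup>2"
    define YB where "YB = T21 m1 m2 \<epsilon> \<delta> \<alpha> \<gamma> T1 T2 u1 u2 + (norm (u21 m1 m2 \<epsilon> \<delta> u1 u2))\<^sup>2"
    have n1p: "n1 > 0" and n2p: "n2 > 0" using n10 n20 by (simp_all add: n1_def n2_def)
    have T10: "T1 \<ge> 0" using moment_bound(1)[OF f10 fi1 n10 as(1)] by (simp add: T1_def)
    have T20: "T2 \<ge> 0" using moment_bound(1)[OF f20 fi2 n20 as(2)] by (simp add: T2_def)
    have X10: "X1 \<ge> 0" and X20: "X2 \<ge> 0" using T10 T20 by (simp_all add: X1_def X2_def)
    have Nq10: "Nq q f1 \<ge> 0" using Nq_ge[of 0 q f1] by (simp add: zero_ereal_def)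
    have Nq20: "Nq q f2 \<ge> 0" using Nq_ge[of 0 q f2] by (simp add: zero_ereal_def)
    have B1: "n1 * X1 powr e \<le> C0 * M1" if "Nq q f1 = ereal M1" for M1
    proof -
      have "n1 * X1 powr e \<le> Cs m1 q CARD('n) * M1"
        using single_bound[OF f10 fi1 n10 as(1) as(11) that]
        by (simp add: n1_def X1_def T1_def u1_def e_def N_def)
      also have "\<dots> \<le> C0 * M1"
        using that Nq10 by (intro mult_right_mono) (auto simp: C0_def)
      finally show ?thesis .
    qed
    have B2: "n2 * X2 powr e \<le> C0 * M2" if "Nq q f2 = ereal M2" for M2
    proof -
      have "n2 * X2 powr e \<le> Cs m2 q CARD('n) * M2"
        using single_bound[OF f20 fi2 n20 as(2) as(11) that]
        by (simp add: n2_def X2_def T2_def u2_def e_def N_def)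
      also have "\<dots> \<le> C0 * M2"
        using that Nq20 by (intro mult_right_mono) (auto simp: C0_def)
      finally show ?thesis .
    qed
    have YA: "YA \<ge> 0" "YA \<le> A * (X1 + X2)"
      using YA_bound[OF T10 T20 as(5) as(6) as(9), of A \<delta> u1 u2] A1 a0
      by (auto simp: YA_def X1_def X2_def A_def)
    have YB: "YB \<ge> 0" "YB \<le> A * (X1 + X2)"
      using YB_bound[OF T10 T20 as(5) as(6) as(3) as(4), of m1 \<delta> m2 \<gamma> A u1 u2] A1 a0 as(9)
      by (auto simp: YB_def X1_def X2_def A_def a_def b_def)
    have i1: "ereal (n1 * X1 powr e) \<le> ereal C * Nq q f1"
    proof (rule ereal_goal[OF Nq10 Cp])
      fix M1 assume M: "Nq q f1 = ereal M1"
      have "M1 \<ge> 0" using Nq10 M by simp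
      thus "n1 * X1 powr e \<le> C * M1" using B1[OF M] CC0 by (meson mult_right_mono order_trans)
    qed
    have i2: "ereal (n2 * X2 powr e) \<le> ereal C * Nq q f2"
    proof (rule ereal_goal[OF Nq20 Cp])
      fix M2 assume M: "Nq q f2 = ereal M2"
      have "M2 \<ge> 0" using Nq20 M by simp
      thus "n2 * X2 powr e \<le> C * M2" using B2[OF M] CC0 by (meson mult_right_mono order_trans)
    qed
    have i3: "ereal (n1 * YA powr e) \<le> ereal C * (Nq q f1 + ereal (n1 / n2) * Nq q f2)"
    proof (rule ereal_goal2[OF Nq10 Nq20 Cp])
      show "n1 / n2 > 0" using n1p n2p by simp
      fix M1 M2 assume M1: "Nq q f1 = ereal M1" and M2: "Nq q f2 = ereal M2"
      have M10: "M1 \<ge> 0" using Nq10 M1 by simp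
      have M20: "M2 \<ge> 0" using Nq20 M2 by simp
      have "n1 * YA powr e \<le> (2 * A) powr e * (n1 * X1 powr e + n1 * X2 powr e)"
        by (rule comb[OF n1p YA Ap e0 X10 X20])
      also have "n1 * X2 powr e = (n1 / n2) * (n2 * X2 powr e)" using n2p by simp
      also have "\<dots> \<le> (n1 / n2) * (C0 * M2)"
        using B2[OF M2] n1p n2p by (intro mult_left_mono) auto
      finally have "n1 * YA powr e \<le> (2 * A) powr e * (C0 * M1 + n1 / n2 * (C0 * M2))"
        using B1[OF M1] by (smt (verit) mult_left_mono powr_ge_zero)
      also have "\<dots> = ((2 * A) powr e * C0) * (M1 + n1 / n2 * M2)" by (simp add: algebra_simps)
      also have "\<dots> \<le> C * (M1 + n1 / n2 * M2)"
        using CA M10 M20 n1p n2p by (intro mult_right_mono) auto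
      finally show "n1 * YA powr e \<le> C * (M1 + n1 / n2 * M2)" .
    qed
    have i4: "ereal (n2 * YB powr e) \<le> ereal C * (ereal (n2 / n1) * Nq q f1 + Nq q f2)"
      unfolding add.commute[of "ereal (n2 / n1) * Nq q f1"]
    proof (rule ereal_goal2[OF Nq20 Nq10 Cp])
      show "n2 / n1 > 0" using n1p n2p by simp
      fix M2 M1 assume M2: "Nq q f2 = ereal M2" and M1: "Nq q f1 = ereal M1"
      have M10: "M1 \<ge> 0" using Nq10 M1 by simp
      have M20: "M2 \<ge> 0" using Nq20 M2 by simp
      have "n2 * YB powr e \<le> (2 * A) powr e * (n2 * X1 powr e + n2 * X2 powr e)"
        by (rule comb[OF n2p YB Ap e0 X10 X20])
      also have "n2 * X1 powr e = (n2 / n1) * (n1 * X1 powr e)" using n1p by simp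
      also have "\<dots> \<le> (n2 / n1) * (C0 * M1)"
        using B1[OF M1] n1p n2p by (intro mult_left_mono) auto
      finally have "n2 * YB powr e \<le> (2 * A) powr e * (n2 / n1 * (C0 * M1) + C0 * M2)"
        using B2[OF M2] by (smt (verit) mult_left_mono powr_ge_zero)
      also have "\<dots> = ((2 * A) powr e * C0) * (M2 + n2 / n1 * M1)" by (simp add: algebra_simps)
      also have "\<dots> \<le> C * (M2 + n2 / n1 * M1)"
        using CA M10 M20 n1p n2p by (intro mult_right_mono) auto
      finally show "n2 * YB powr e \<le> C * (M2 + n2 / n1 * M1)" .
    qed
    show "let n1 = dens f1; n2 = dens f2; u1 = mvel f1; u2 = mvel f2;
          T1 = temp m1 f1; T2 = temp m2 f2; e = (q - real CARD('n)) / 2;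
          uA = u12 \<delta> u1 u2; uB = u21 m1 m2 \<epsilon> \<delta> u1 u2;
          TA = T12 \<alpha> \<gamma> T1 T2 u1 u2; TB = T21 m1 m2 \<epsilon> \<delta> \<alpha> \<gamma> T1 T2 u1 u2
      in ereal (n1 * (T1 + (norm u1)\<^sup>2) powr e) \<le> ereal C * Nq q f1
       \<and> ereal (n2 * (T2 + (norm u2)\<^sup>2) powr e) \<le> ereal C * Nq q f2
       \<and> ereal (n1 * (TA + (norm uA)\<^sup>2) powr e) \<le> ereal C * (Nq q f1 + ereal (n1 / n2) * Nq q f2)
       \<and> ereal (n2 * (TB + (norm uB)\<^sup>2) powr e) \<le> ereal C * (ereal (n2 / n1) * Nq q f1 + Nq q f2)"
      using i1 i2 i3 i4 unfolding Let_def
      by (simp only: n1_def n2_def u1_def u2_def T1_def T2_def X1_def X2_def YA_def YB_def e_def N_def)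
  qed
qed

end
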